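(* Let $a,b\ge 1$ and $s\in\mathbb{R}$. Let $f$ be the betaized Meixner-Morris density $$ f(x)=\frac{f_a(x)\,f_b(s-x)}{f_{a+b}(s)},\quad x\in\mathbb{R}, $$ where for $\rho>0$, $f_\rho(x)=\frac{2^{\rho-2}}{\pi\Gamma(\rho)}\left|\Gamma\left(\frac{\rho+ix}{2}\right)\right|^2$. Define $$ g(x)=\gamma\left(\left(\tfrac{a}{2}\right)^2+\left(\tfrac{x}{2}\right)^2\right)^{\frac{a-1}{2}}\left(\left(\tfrac{b}{2}\right)^2+\left(\tfrac{s-x}{2}\right)^2\right)^{\frac{b-1}{2}}e^{-x\arctan(x/a)-(s-x)\arctan((s-x)/b)}, $$ with $$ \gamma=\frac{\pi\,\Gamma(a+b)}{e^{a+b}\,\Gamma(a)\Gamma(b)\left|\Gamma\left(\frac{a+b+is}{2}\right)\right|^2}. $$ Then for all $x\in\mathbb{R}$, $$ \alpha\, g(x)\le f(x)\le \beta\, g(x), $$ where $\alpha=(1-3/(a\pi^2))^2(1-3/(b\pi^2))^2$ and $\beta=(1+3/(a\pi^2))^2(1+3/(b\pi^2))^2$.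
   Context: $\Gamma$ denotes the complex Euler gamma function, $\Gamma(z)=\int_0^\infty t^{z-1}e^{-t}\,dt$ for $\mathrm{Re}(z)>0$. *)

theory Defs
  imports "HOL-Analysis.Analysis"
begin

definition MM_density :: "real \<Rightarrow> real \<Rightarrow> real" where
  "MM_density \<rho> x = 2 powr (\<rho> - 2) / (pi * Gamma \<rho>) *
     (cmod (Gamma (Complex (\<rho> / 2) (x / 2))))\<^sup>2"

definition betaized_MM :: "real \<Rightarrow> real \<Rightarrow> real \<Rightarrow> real \<Rightarrow> real" where
  "betaized_MM a b s x = MM_density a x * MM_density b (s - x) / MM_density (a + b) s"

definition gamma_const :: "real \<Rightarrow> real \<Rightarrow> real \<Rightarrow> real" where
  "gamma_const a b s = pi * Gamma (a + b) /
     (exp (a + b) * Gamma a * Gamma b * (cmod (Gamma (Complex ((a + b) / 2) (s / 2))))\<^sup>2)"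

definition g_approx :: "real \<Rightarrow> real \<Rightarrow> real \<Rightarrow> real \<Rightarrow> real" where
  "g_approx a b s x = gamma_const a b s *
     ((a / 2)\<^sup>2 + (x / 2)\<^sup>2) powr ((a - 1) / 2) *
     ((b / 2)\<^sup>2 + ((s - x) / 2)\<^sup>2) powr ((b - 1) / 2) *
     exp (- x * arctan (x / a) - (s - x) * arctan ((s - x) / b))"

end

theory Submission
  imports Defs "HOL-Real_Asymp.Real_Asymp"
begin


definition psi :: "real \<Rightarrow> real \<Rightarrow> real \<Rightarrow> real" where
  "psi P q t = (P/2) * (ln ((P+t)\<^sup>2 + q\<^sup>2) - ln ((P-t)\<^sup>2 + q\<^sup>2))
     - q * arctan (q / (P+t)) + q * arctan (q / (P-t)) - 2 * t"

lemma arctan_aux: "(X::real) > 0 \<Longrightarrow> 1/(1+(q/X)\<^sup>2) * (c/X\<^sup>2) = c/(X\<^sup>2 + q\<^sup>2)"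
proof -
  assume X: "X > 0"
  have h: "1+(q/X)\<^sup>2 = (X\<^sup>2 + q\<^sup>2)/X\<^sup>2" using X by (simp add: add_divide_distrib power_divide)
  have p: "X\<^sup>2 + q\<^sup>2 > 0" using X by (simp add: add_pos_nonneg)
  have "1/(1+(q/X)\<^sup>2) * (c/X\<^sup>2) = 1/((X\<^sup>2 + q\<^sup>2)/X\<^sup>2) * (c/X\<^sup>2)" by (simp only: h)
  also have "\<dots> = c/(X\<^sup>2 + q\<^sup>2)" using X p by (simp add: field_simps)
  finally show ?thesis .
qed

lemma psi_deriv:
  fixes P q t :: real
  assumes "P > 1/2" "t \<ge> 0" "t \<le> 1/2"
  shows "(psi P q has_real_derivative
      (2*t\<^sup>2*(P\<^sup>2-t\<^sup>2-q\<^sup>2) / (((P+t)\<^sup>2 + q\<^sup>2) * ((P-t)\<^sup>2 + q\<^sup>2)))) (at t)"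
proof -
  have p1: "P + t > 0" "P - t > 0" using assms by auto
  have d1: "(P+t)\<^sup>2 + q\<^sup>2 > 0" "(P-t)\<^sup>2 + q\<^sup>2 > 0" using p1 by (auto intro: add_pos_nonneg)
  have e1: "((\<lambda>t. ln ((P+t)\<^sup>2 + q\<^sup>2)) has_real_derivative (2*(P+t)/((P+t)\<^sup>2 + q\<^sup>2))) (at t)"
    using d1 by (auto intro!: derivative_eq_intros simp: field_simps)
  have e2: "((\<lambda>t. ln ((P-t)\<^sup>2 + q\<^sup>2)) has_real_derivative (-2*(P-t)/((P-t)\<^sup>2 + q\<^sup>2))) (at t)"
    using d1 by (auto intro!: derivative_eq_intros simp: field_simps)
  have e3: "((\<lambda>t. arctan (q/(P+t))) has_real_derivative (-q/((P+t)\<^sup>2 + q\<^sup>2))) (at t)"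
  proof -
    have "((\<lambda>t. arctan (q/(P+t))) has_real_derivative (1/(1+(q/(P+t))\<^sup>2) * (-(q*1)/(P+t)\<^sup>2))) (at t)"
      using p1 by (auto intro!: derivative_eq_intros simp: power2_eq_square divide_inverse mult_ac)
    moreover have "1/(1+(q/(P+t))\<^sup>2) * (-(q*1)/(P+t)\<^sup>2) = -q/((P+t)\<^sup>2 + q\<^sup>2)"
      using p1 arctan_aux[of "P+t" q "-(q*1)"] by simp
    ultimately show ?thesis by (rule DERIV_cong)
  qed
  have e4: "((\<lambda>t. arctan (q/(P-t))) has_real_derivative (q/((P-t)\<^sup>2 + q\<^sup>2))) (at t)"
  proof -
    have "((\<lambda>t. arctan (q/(P-t))) has_real_derivative (1/(1+(q/(P-t))\<^sup>2) * (-(q*(-1))/(P-t)\<^sup>2))) (at t)"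
      using p1 by (auto intro!: derivative_eq_intros simp: power2_eq_square divide_inverse mult_ac)
    moreover have "1/(1+(q/(P-t))\<^sup>2) * (-(q*(-1))/(P-t)\<^sup>2) = q/((P-t)\<^sup>2 + q\<^sup>2)"
      using p1 arctan_aux[of "P-t" q "-(q*(-1))"] by simp
    ultimately show ?thesis by (rule DERIV_cong)
  qed
  have "(psi P q has_real_derivative
      ((P/2) * ((2*(P+t)/((P+t)\<^sup>2 + q\<^sup>2)) - (-2*(P-t)/((P-t)\<^sup>2 + q\<^sup>2)))
       - q * (-q/((P+t)\<^sup>2 + q\<^sup>2)) + q * (q/((P-t)\<^sup>2 + q\<^sup>2)) - 2 * 1)) (at t)"
    unfolding psi_def[abs_def]
    by (intro DERIV_diff DERIV_add DERIV_cmult e1 e2 e3 e4 DERIV_ident DERIV_const) 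
  moreover have "((P/2) * ((2*(P+t)/((P+t)\<^sup>2 + q\<^sup>2)) - (-2*(P-t)/((P-t)\<^sup>2 + q\<^sup>2)))
       - q * (-q/((P+t)\<^sup>2 + q\<^sup>2)) + q * (q/((P-t)\<^sup>2 + q\<^sup>2)) - 2 * 1) = 
     (2*t\<^sup>2*(P\<^sup>2-t\<^sup>2-q\<^sup>2) / (((P+t)\<^sup>2 + q\<^sup>2) * ((P-t)\<^sup>2 + q\<^sup>2)))" (is "?L = ?R")
  proof -
    have gen: "\<And>A B::real. A \<noteq> 0 \<Longrightarrow> B \<noteq> 0 \<Longrightarrow> (P/2) * ((2*(P+t)/A) - (-2*(P-t)/B))
       - q * (-q/A) + q * (q/B) - 2 * 1 = (P*(P+t)*B + P*(P-t)*A + q\<^sup>2*(A+B) - 2*A*B)/(A*B)"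
      by (simp add: field_simps power2_eq_square)
    have poly: "P*(P+t)*((P-t)\<^sup>2 + q\<^sup>2) + P*(P-t)*((P+t)\<^sup>2 + q\<^sup>2) + q\<^sup>2*(((P+t)\<^sup>2 + q\<^sup>2)+((P-t)\<^sup>2 + q\<^sup>2))
       - 2*((P+t)\<^sup>2 + q\<^sup>2)*((P-t)\<^sup>2 + q\<^sup>2) = 2*t\<^sup>2*(P\<^sup>2-t\<^sup>2-q\<^sup>2)"
      by (simp add: power2_eq_square algebra_simps)
    have "?L = (P*(P+t)*((P-t)\<^sup>2 + q\<^sup>2) + P*(P-t)*((P+t)\<^sup>2 + q\<^sup>2) + q\<^sup>2*(((P+t)\<^sup>2 + q\<^sup>2)+((P-t)\<^sup>2 + q\<^sup>2))
       - 2*((P+t)\<^sup>2 + q\<^sup>2)*((P-t)\<^sup>2 + q\<^sup>2))/(((P+t)\<^sup>2 + q\<^sup>2) * ((P-t)\<^sup>2 + q\<^sup>2))"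
      using d1 by (intro gen) auto
    also have "\<dots> = ?R" by (simp only: poly)
    finally show ?thesis .
  qed
  ultimately show ?thesis by (rule DERIV_cong)
qed
lemma psi_deriv_bound:
  fixes P q t :: real
  assumes "P > 1/2" "t \<ge> 0" "t \<le> 1/2"
  shows "\<bar>2*t\<^sup>2*(P\<^sup>2-t\<^sup>2-q\<^sup>2) / (((P+t)\<^sup>2 + q\<^sup>2) * ((P-t)\<^sup>2 + q\<^sup>2))\<bar> \<le> 2*t\<^sup>2/(P\<^sup>2-1/4)"
proof -
  define A where "A = P\<^sup>2-t\<^sup>2-q\<^sup>2"
  define B where "B = P\<^sup>2-t\<^sup>2"
  have K: "P\<^sup>2 - 1/4 > 0" using assms
  proof -
    have "P\<^sup>2 > (1/2)\<^sup>2" using assms by (intro power_strict_mono) auto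
    then show ?thesis by (simp add: power2_eq_square)
  qed
  have tt: "t\<^sup>2 \<le> 1/4"
  proof -
    have "t\<^sup>2 \<le> (1/2)\<^sup>2" using assms by (intro power_mono) auto
    then show ?thesis by (simp add: power2_eq_square)
  qed
  have BK: "B \<ge> P\<^sup>2 - 1/4" using tt B_def by simp
  have Bp: "B > 0" using BK K by simp
  have DD: "((P+t)\<^sup>2 + q\<^sup>2) * ((P-t)\<^sup>2 + q\<^sup>2) = A\<^sup>2 + 4*P\<^sup>2*q\<^sup>2"
    unfolding A_def by (simp add: power2_eq_square algebra_simps)
  have Dpos: "A\<^sup>2 + 4*P\<^sup>2*q\<^sup>2 > 0"
  proof -
    have "(P+t)\<^sup>2 + q\<^sup>2 > 0" "(P-t)\<^sup>2 + q\<^sup>2 > 0" using assms by (auto intro: add_pos_nonneg)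
    then show ?thesis using DD by (metis mult_pos_pos)
  qed
  have key: "\<bar>A\<bar> * B \<le> A\<^sup>2 + 4*P\<^sup>2*q\<^sup>2"
  proof (cases "A \<ge> 0")
    case True
    have "\<bar>A\<bar> * B = A\<^sup>2 + A*q\<^sup>2" using True unfolding A_def B_def by (simp add: power2_eq_square algebra_simps)
    also have "A*q\<^sup>2 \<le> P\<^sup>2*q\<^sup>2" unfolding A_def by (intro mult_right_mono) auto
    moreover have "P\<^sup>2 * q\<^sup>2 \<ge> 0" by simp
    ultimately show ?thesis by linarith
  next
    case False
    have "\<bar>A\<bar> = q\<^sup>2 - B" using False unfolding A_def B_def by simp
    then have "\<bar>A\<bar> * B \<le> q\<^sup>2 * B" using Bp by (simp add: mult_right_mono)
    also have "\<dots> \<le> q\<^sup>2 * P\<^sup>2" unfolding B_def by (intro mult_left_mono) auto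
    finally have "\<bar>A\<bar> * B \<le> q\<^sup>2 * P\<^sup>2" .
    moreover have "A\<^sup>2 + 4*P\<^sup>2*q\<^sup>2 - q\<^sup>2 * P\<^sup>2 = A\<^sup>2 + 3*(P\<^sup>2*q\<^sup>2)" by (simp add: algebra_simps)
    moreover have "P\<^sup>2 * q\<^sup>2 \<ge> 0" "A\<^sup>2 \<ge> 0" by simp_all
    ultimately show ?thesis by linarith
  qed
  have "\<bar>2*t\<^sup>2*A / (A\<^sup>2 + 4*P\<^sup>2*q\<^sup>2)\<bar> = 2*t\<^sup>2 * (\<bar>A\<bar> / (A\<^sup>2 + 4*P\<^sup>2*q\<^sup>2))"
    using Dpos by (simp add: abs_mult)
  also have "\<bar>A\<bar> / (A\<^sup>2 + 4*P\<^sup>2*q\<^sup>2) \<le> 1 / B"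
    using key Dpos Bp by (simp add: divide_simps mult.commute)
  also have "1/B \<le> 1/(P\<^sup>2-1/4)" using BK K by (intro divide_left_mono) auto
  finally have "\<bar>2*t\<^sup>2*A / (A\<^sup>2 + 4*P\<^sup>2*q\<^sup>2)\<bar> \<le> 2*t\<^sup>2 * (1/(P\<^sup>2-1/4))"
    by (simp add: mult_left_mono)
  then show ?thesis using DD unfolding A_def by simp
qed

lemma psi_zero: "psi P q 0 = 0" unfolding psi_def by simp

lemma psi_bound:
  fixes P q :: real
  assumes "P > 1/2"
  shows "\<bar>psi P q (1/2)\<bar> \<le> 1/(12*(P\<^sup>2-1/4))"
proof -
  define K where "K = P\<^sup>2-1/4"
  have K0: "P\<^sup>2 - 1/4 > 0" using assms
  proof -
    have "P\<^sup>2 > (1/2)\<^sup>2" using assms by (intro power_strict_mono) auto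
    then show ?thesis by (simp add: power2_eq_square)
  qed
  have K: "K > 0" using K0 K_def by simp
  define G where "G t = 2*t^3/(3*K)" for t
  have Gd: "(G has_real_derivative 2*t\<^sup>2/K) (at t)" for t
    unfolding G_def[abs_def] using K by (auto intro!: derivative_eq_intros simp: field_simps power2_eq_square)
  have m1: "G 0 - psi P q 0 \<le> G (1/2) - psi P q (1/2)"
  proof (rule DERIV_nonneg_imp_nondecreasing[of 0 "1/2" "\<lambda>t. G t - psi P q t"])
    fix t :: real assume t: "0 \<le> t" "t \<le> 1/2"
    show "\<exists>y. ((\<lambda>t. G t - psi P q t) has_real_derivative y) (at t) \<and> y \<ge> 0"
      using DERIV_diff[OF Gd psi_deriv[OF assms t, of q]] psi_deriv_bound[OF assms t, of q] K_def
      by (intro exI conjI) (assumption, simp only: abs_le_iff, linarith)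
  qed simp
  have m2: "G 0 + psi P q 0 \<le> G (1/2) + psi P q (1/2)"
  proof (rule DERIV_nonneg_imp_nondecreasing[of 0 "1/2" "\<lambda>t. G t + psi P q t"])
    fix t :: real assume t: "0 \<le> t" "t \<le> 1/2"
    show "\<exists>y. ((\<lambda>t. G t + psi P q t) has_real_derivative y) (at t) \<and> y \<ge> 0"
      using DERIV_add[OF Gd psi_deriv[OF assms t, of q]] psi_deriv_bound[OF assms t, of q] K_def
      by (intro exI conjI) (assumption, simp only: abs_le_iff, linarith)
  qed simp
  have "G (1/2) = 1/(12*K)" unfolding G_def using K by (simp add: field_simps)
  then show ?thesis using m1 m2 psi_zero[of P q] unfolding G_def K_def by (simp add: G_def)
qed


lemma Re_pos_not_nonpos_Ints: "Re (z::complex) > 0 \<Longrightarrow> z \<notin> \<int>\<^sub>\<le>\<^sub>0"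
  using nonpos_Ints_subset_nonpos_Reals complex_nonpos_Reals_iff by fastforce

lemma Gamma_ratio_lim:
  fixes z :: complex assumes "Re z > 0"
  shows "(\<lambda>n. fact n * exp (z * of_real (ln (of_nat n))) / Gamma (z + of_nat n + 1)) \<longlonglongrightarrow> 1"
proof -
  have z: "z \<notin> \<int>\<^sub>\<le>\<^sub>0" using assms Re_pos_not_nonpos_Ints by blast
  have G: "Gamma z \<noteq> 0" using z Gamma_nonzero by blast
  have eq: "Gamma_series z n / Gamma z = fact n * exp (z * of_real (ln (of_nat n))) / Gamma (z + of_nat n + 1)" for n
  proof -
    have "pochhammer z (n+1) = Gamma (z + of_nat (n+1)) / Gamma z" using pochhammer_Gamma[OF z] .
    then show ?thesis unfolding Gamma_series_def using G by (simp add: field_simps add_ac)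
  qed
  have "(\<lambda>n. Gamma_series z n / Gamma z) \<longlonglongrightarrow> Gamma z / Gamma z"
    by (intro tendsto_divide Gamma_series_LIMSEQ tendsto_const G)
  then show ?thesis using G eq by simp
qed

lemma Gamma_ratio_lim_norm:
  fixes z :: complex assumes "Re z > 0"
  shows "(\<lambda>n. fact n * exp (Re z * ln (real n)) / norm (Gamma (z + of_nat n + 1))) \<longlonglongrightarrow> 1"
proof -
  have "(\<lambda>n. norm (fact n * exp (z * of_real (ln (of_nat n))) / Gamma (z + of_nat n + 1))) \<longlonglongrightarrow> norm (1::complex)"
    by (intro tendsto_norm Gamma_ratio_lim assms)
  moreover have "norm (fact n * exp (z * of_real (ln (of_nat n))) / Gamma (z + of_nat n + 1)) =
     fact n * exp (Re z * ln (real n)) / norm (Gamma (z + of_nat n + 1))" for n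
    by (simp add: norm_divide norm_mult)
  ultimately show ?thesis by simp
qed

definition Mr :: "real \<Rightarrow> real" where
  "Mr y = ln (Gamma y) - (y - 1/2) * ln y + y - ln (2*pi)/2"

lemma Gamma_ratio_lim_real:
  assumes "(x::real) > 0"
  shows "(\<lambda>n. ln (fact n) + x * ln (real n) - ln (Gamma (x + real n + 1))) \<longlonglongrightarrow> 0"
proof -
  have "(\<lambda>n. fact n * exp (x * ln (real n)) / Gamma (x + real n + 1)) \<longlonglongrightarrow> 1"
  proof -
    have "(\<lambda>n. fact n * exp (Re (of_real x) * ln (real n)) / norm (Gamma (of_real x + of_nat n + 1 :: complex))) \<longlonglongrightarrow> 1"
      using assms by (intro Gamma_ratio_lim_norm) simp
    moreover have "norm (Gamma (of_real x + of_nat n + 1 :: complex)) = Gamma (x + real n + 1)" for n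
    proof -
      have "(of_real x + of_nat n + 1 :: complex) = of_real (x + real n + 1)" by simp
      then have "Gamma (of_real x + of_nat n + 1 :: complex) = of_real (Gamma (x + real n + 1))"
        by (simp only: Gamma_complex_of_real)
      then show ?thesis using assms by simp
    qed
    ultimately show ?thesis by simp
  qed
  then have "(\<lambda>n. ln (fact n * exp (x * ln (real n)) / Gamma (x + real n + 1))) \<longlonglongrightarrow> ln 1"
    by (intro tendsto_ln) auto
  moreover have "ln (fact n * exp (x * ln (real n)) / Gamma (x + real n + 1)) =
       ln (fact n) + x * ln (real n) - ln (Gamma (x + real n + 1))" for n
  proof -
    have "Gamma (x + real n + 1) > 0" using assms by simp
    moreover have "(fact n :: real) > 0" by simp
    ultimately show ?thesis by (simp add: ln_div ln_mult)
  qed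
  ultimately show ?thesis by simp
qed

lemma Mr_shift_lim:
  assumes "(x::real) > 0"
  shows "(\<lambda>n. Mr (x + real n) - Mr (real n + 1)) \<longlonglongrightarrow> 0"
proof -
  have E: "(\<lambda>n::nat. x * ln n - (x+n+1/2) * ln (x+n) + (n+1/2) * ln (n+1) + x - 1) \<longlonglongrightarrow> 0"
    using assms by real_asymp
  have eq: "Mr (x + real n) - Mr (real n + 1) =
     - (ln (fact n) + x * ln (real n) - ln (Gamma (x + real n + 1))) +
     (x * ln n - (x+n+1/2) * ln (x+n) + (n+1/2) * ln (n+1) + x - 1)" for n
  proof -
    have xn: "x + real n > 0" using assms by simp
    have "Gamma (x + real n + 1) = (x + real n) * Gamma (x + real n)"
    proof -
      have "x + real n \<notin> \<int>\<^sub>\<le>\<^sub>0" using xn nonpos_Ints_nonpos by fastforce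
      then show ?thesis using Gamma_plus1[of "x + real n"] by simp
    qed
    then have g1: "ln (Gamma (x + real n + 1)) = ln (x + real n) + ln (Gamma (x + real n))"
    proof -
      have "Gamma (x + real n) > 0" using xn by simp
      then show ?thesis using xn \<open>Gamma (x + real n + 1) = (x + real n) * Gamma (x + real n)\<close>
        by (simp only: ln_mult_pos)
    qed
    have g2: "ln (fact n) = ln (Gamma (real n + 1))"
    proof -
      have "Gamma (1 + real n) = (fact n :: real)" by (rule Gamma_fact)
      then show ?thesis by (simp add: add.commute)
    qed
    show ?thesis unfolding Mr_def using g1 g2 by (simp add: algebra_simps)
  qed
  show ?thesis unfolding eq
    using tendsto_add[OF tendsto_minus[OF Gamma_ratio_lim_real[OF assms]] E] by simp
qed

lemma Gamma_dup_real:
  assumes "(N::real) > 0"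
  shows "ln (Gamma N) + ln (Gamma (N + 1/2)) = (1 - 2*N) * ln 2 + ln pi / 2 + ln (Gamma (2*N))"
proof -
  have a1: "(of_real N :: complex) \<notin> \<int>\<^sub>\<le>\<^sub>0" using assms Re_pos_not_nonpos_Ints by simp
  have a2: "(of_real N :: complex) + 1/2 \<notin> \<int>\<^sub>\<le>\<^sub>0" using assms Re_pos_not_nonpos_Ints by simp
  have D: "Gamma (of_real N :: complex) * Gamma (of_real N + 1/2) =
      exp ((1 - 2 * of_real N) * of_real (ln 2)) * of_real (sqrt pi) * Gamma (2 * of_real N)"
    using Gamma_legendre_duplication[OF a1 a2] .
  have g1: "Gamma (of_real N + 1/2 :: complex) = of_real (Gamma (N + 1/2))"
    using Gamma_complex_of_real[of "N + 1/2"] by simp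
  have g2: "Gamma (2 * of_real N :: complex) = of_real (Gamma (2*N))"
    using Gamma_complex_of_real[of "2*N"] by simp
  have ge: "exp ((1 - 2 * of_real N) * of_real (ln 2)) = (of_real (exp ((1 - 2*N) * ln 2)) :: complex)"
  proof -
    have "(1 - 2 * complex_of_real N) * complex_of_real (ln 2) = of_real ((1-2*N)*ln 2)" by simp
    then show ?thesis by (simp only: of_real_exp)
  qed
  have "(of_real (Gamma N * Gamma (N + 1/2)) :: complex) = of_real (exp ((1 - 2*N) * ln 2) * sqrt pi * Gamma (2*N))"
    using D unfolding g1 g2 ge Gamma_complex_of_real by (simp only: of_real_mult)
  then have e: "Gamma N * Gamma (N + 1/2) = exp ((1 - 2*N) * ln 2) * sqrt pi * Gamma (2*N)"
    by (simp only: of_real_eq_iff)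
  have p: "Gamma N > 0" "Gamma (N+1/2) > 0" "Gamma (2*N) > 0" "sqrt pi > 0" using assms by auto
  have "ln (Gamma N * Gamma (N + 1/2)) = ln (exp ((1 - 2*N) * ln 2) * sqrt pi * Gamma (2*N))"
    using e by simp
  then show ?thesis using p by (simp add: ln_mult ln_sqrt)
qed

lemma dup_alg: "gN + gH = (1-2*N) * L2 + Lp/2 + g2 \<Longrightarrow> (gN - (N-1/2)*lN + N - (L2+Lp)/2) + (gH - (N+1/2-1/2)*lH + (N+1/2) - (L2+Lp)/2) - (g2 - (2*N-1/2)*(L2+lN) + 2*N - (L2+Lp)/2) = -N*(lH - lN) + (1/2::real)"
  by (simp add: field_simps)

lemma Mr_dup_lim: "(\<lambda>n. Mr (real n + 1) + Mr (real n + 1 + 1/2) - Mr (2*(real n + 1))) \<longlonglongrightarrow> 0"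
proof -
  have eq: "Mr N + Mr (N + 1/2) - Mr (2*N) = - N * ln (1 + 1/(2*N)) + 1/2" if N: "N > 0" for N :: real
  proof -
    have l1: "ln (2*N) = ln 2 + ln N" using N by (simp add: ln_mult)
    have l2: "ln (2*pi) = ln 2 + ln pi" by (simp add: ln_mult)
    have l3: "ln (1 + 1/(2*N)) = ln (N + 1/2) - ln N"
    proof -
      have "1 + 1/(2*N) = (N + 1/2) / N" using N by (simp add: field_simps)
      then show ?thesis using N by (simp add: ln_div)
    qed
    have dup: "ln (Gamma N) + ln (Gamma (N + 1/2)) = (1 - 2*N) * ln 2 + ln pi / 2 + ln (Gamma (2*N))"
      using Gamma_dup_real[OF N] .
    show ?thesis unfolding Mr_def l1 l2 l3 using dup_alg[OF dup] .
  qed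
  have L: "(\<lambda>n::nat. - (real n + 1) * ln (1 + 1/(2*(real n + 1))) + 1/2) \<longlonglongrightarrow> 0"
    by real_asymp
  have fe: "(\<lambda>n. Mr (real n + 1) + Mr (real n + 1 + 1/2) - Mr (2*(real n + 1))) =
            (\<lambda>n::nat. - (real n + 1) * ln (1 + 1/(2*(real n + 1))) + 1/2)"
    by (rule ext, rule eq) simp
  show ?thesis unfolding fe by (rule L)
qed



definition Fq :: "real \<Rightarrow> real \<Rightarrow> real" where
  "Fq x q = (x - 1/2) * ln (x\<^sup>2 + q\<^sup>2) / 2 - q * arctan (q / x) - x"

definition Mc :: "real \<Rightarrow> real \<Rightarrow> real" where
  "Mc x q = ln (norm (Gamma (Complex x q))) - Fq x q - ln (2*pi)/2"

lemma Gamma_Complex_pos: "x > 0 \<Longrightarrow> norm (Gamma (Complex x q)) > 0"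
  using Gamma_nonzero[of "Complex x q"] Re_pos_not_nonpos_Ints[of "Complex x q"] by simp

lemma Mc_step:
  assumes "x > 0"
  shows "Mc x q - Mc (x+1) q = psi (x+1/2) q (1/2)"
proof -
  define w where "w = Complex x q"
  have w1: "Complex (x+1) q = w + 1" unfolding w_def by (simp add: complex_eq_iff)
  have "Gamma (w + 1) = w * Gamma w"
    using Gamma_plus1[of w] Re_pos_not_nonpos_Ints[of w] assms unfolding w_def by simp
  then have "norm (Gamma (Complex (x+1) q)) = sqrt (x\<^sup>2 + q\<^sup>2) * norm (Gamma w)"
    unfolding w1 by (simp add: norm_mult w_def complex_norm)
  then have l: "ln (norm (Gamma (Complex (x+1) q))) = ln (x\<^sup>2 + q\<^sup>2) / 2 + ln (norm (Gamma w))"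
  proof -
    assume h: "norm (Gamma (Complex (x+1) q)) = sqrt (x\<^sup>2 + q\<^sup>2) * norm (Gamma w)"
    have p1: "sqrt (x\<^sup>2 + q\<^sup>2) > 0" using assms by (simp add: add_pos_nonneg)
    have p2: "norm (Gamma w) > 0" using Gamma_Complex_pos[OF assms] unfolding w_def .
    have "ln (norm (Gamma (Complex (x+1) q))) = ln (sqrt (x\<^sup>2 + q\<^sup>2)) + ln (norm (Gamma w))"
      unfolding h using p1 p2 by (rule ln_mult_pos)
    then show ?thesis by (simp add: ln_sqrt)
  qed
  have a1: "x + 1/2 + 1/2 = x + 1" "x + 1/2 - 1/2 = x" by simp_all
  show ?thesis unfolding Mc_def psi_def Fq_def l a1 w_def
    by (simp add: algebra_simps add_divide_distrib diff_divide_distrib)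
qed


lemma Mc_telescope:
  assumes "x > 0"
  shows "\<bar>Mc x q - Mc (x + real n) q\<bar> \<le> 1/(12*x) - 1/(12*(x + real n))"
proof (induction n)
  case 0
  then show ?case by simp
next
  case (Suc n)
  define y where "y = x + real n"
  have y: "y > 0" using assms y_def by simp
  have st: "Mc y q - Mc (y+1) q = psi (y+1/2) q (1/2)" using Mc_step[OF y] .
  have b: "\<bar>psi (y+1/2) q (1/2)\<bar> \<le> 1/(12*((y+1/2)\<^sup>2-1/4))"
    using psi_bound[of "y+1/2" q] y by simp
  have k: "(y+1/2)\<^sup>2-1/4 = y*(y+1)" by (simp add: power2_eq_square algebra_simps)
  have tel: "1/(12*(y*(y+1))) = 1/(12*y) - 1/(12*(y+1))" using y by (simp add: field_simps)
  have e: "x + real (Suc n) = y + 1" unfolding y_def by simp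
  have IH: "\<bar>Mc x q - Mc y q\<bar> \<le> 1/(12*x) - 1/(12*y)" using Suc.IH unfolding y_def .
  have b': "\<bar>Mc y q - Mc (y+1) q\<bar> \<le> 1/(12*y) - 1/(12*(y+1))" using b k tel st by simp
  have tri: "\<bar>Mc x q - Mc (y+1) q\<bar> \<le> \<bar>Mc x q - Mc y q\<bar> + \<bar>Mc y q - Mc (y+1) q\<bar>"
    using abs_triangle_ineq[of "Mc x q - Mc y q" "Mc y q - Mc (y+1) q"] by simp
  show ?case unfolding e using IH b' tri by linarith
qed

lemma Mc_telescope':
  assumes "x > 0"
  shows "\<bar>Mc x q - Mc (x + real n) q\<bar> \<le> 1/(12*x)"
proof -
  have "1/(12*(x + real n)) \<ge> 0" using assms by simp
  then show ?thesis using Mc_telescope[OF assms, of q n] by linarith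
qed

lemma Mc_zero: "x > 0 \<Longrightarrow> Mc x 0 = Mr x"
proof -
  assume x: "x > 0"
  have "Complex x 0 = of_real x" by (simp add: complex_eq_iff)
  then have "norm (Gamma (Complex x 0)) = Gamma x" using x by (simp add: Gamma_complex_of_real)
  moreover have "ln (x\<^sup>2) = 2 * ln x" using x by (simp add: ln_realpow)
  ultimately show ?thesis unfolding Mc_def Mr_def Fq_def by simp
qed

lemma Mr_telescope:
  assumes "y > 0"
  shows "\<bar>Mr y - Mr (y + real n)\<bar> \<le> 1/(12*y)"
  using Mc_telescope'[OF assms, of 0 n] Mc_zero[OF assms] Mc_zero[of "y + real n"] assms by simp

lemma Mr_nat_lim: "(\<lambda>n. Mr (real n + 1)) \<longlonglongrightarrow> 0"
proof -
  define D where "D n = Mr (real n + 1) + Mr (real n + 1 + 1/2) - Mr (2*(real n + 1))" for n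
  define A where "A n = Mr (3/2 + real n) - Mr (real n + 1)" for n
  define C where "C n = Mr (2*(real n + 1)) - Mr (real n + 1)" for n
  have D: "D \<longlonglongrightarrow> 0" unfolding D_def by (rule Mr_dup_lim)
  have A: "A \<longlonglongrightarrow> 0" unfolding A_def using Mr_shift_lim[of "3/2"] by simp
  have C: "C \<longlonglongrightarrow> 0"
  proof (rule Lim_null_comparison)
    show "\<forall>\<^sub>F n in sequentially. norm (C n) \<le> 1/(12*(real n + 1))"
    proof (intro always_eventually allI)
      fix n
      have T: "\<bar>Mr (real n + 1) - Mr ((real n + 1) + real (n+1))\<bar> \<le> 1/(12*(real n + 1))"
        by (rule Mr_telescope) simp
      have e: "(real n + 1) + real (n+1) = 2*(real n + 1)" by simp
      show "norm (C n) \<le> 1/(12*(real n + 1))" using T[unfolded e] unfolding C_def real_norm_def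
        by (simp only: abs_minus_commute)
    qed
    show "(\<lambda>n. 1/(12*(real n + 1))) \<longlonglongrightarrow> 0" by real_asymp
  qed
  have eq: "Mr (real n + 1) = D n - A n + C n" for n
    unfolding D_def A_def C_def by (simp add: algebra_simps)
  show ?thesis unfolding eq using tendsto_add[OF tendsto_diff[OF D A] C] by simp
qed

lemma Mr_lim: "x > 0 \<Longrightarrow> (\<lambda>n. Mr (x + real n)) \<longlonglongrightarrow> 0"
proof -
  assume x: "x > 0"
  have "(\<lambda>n. (Mr (x + real n) - Mr (real n + 1)) + Mr (real n + 1)) \<longlonglongrightarrow> 0 + 0"
    by (intro tendsto_add Mr_shift_lim x Mr_nat_lim)
  then show ?thesis by simp
qed


lemma Fdiff_lim:
  assumes "x > 0"
  shows "(\<lambda>n::nat. (x+n-1/2)*(ln((x+n)\<^sup>2+q\<^sup>2) - ln((x+n)\<^sup>2))/2 - q*arctan(q/(x+n))) \<longlonglongrightarrow> 0"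
proof (cases "q = 0")
  case True
  then show ?thesis by simp
next
  case False
  define c where "c = \<bar>q\<bar>"
  have c: "c > 0" using False c_def by simp
  have qc: "q\<^sup>2 = c\<^sup>2" unfolding c_def by simp
  have qa: "q*arctan(q/y) = c*arctan(c/y)" for y
    unfolding c_def by (cases "q \<ge> 0") (simp_all add: arctan_minus)
  have "(\<lambda>n::nat. (x+n-1/2)*(ln((x+n)\<^sup>2+c\<^sup>2) - ln((x+n)\<^sup>2))/2 - c*arctan(c/(x+n))) \<longlonglongrightarrow> 0"
    using assms c by real_asymp
  then show ?thesis unfolding qc qa .
qed

lemma Gamma_diff_lim:
  assumes "x > 0"
  shows "(\<lambda>n. ln (norm (Gamma (Complex (x + real n) q))) - ln (Gamma (x + real n))) \<longlonglongrightarrow> 0"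
proof -
  define w where "w = Complex x q"
  have R1: "(\<lambda>n. fact n * exp (x * ln (real n)) / norm (Gamma (w + of_nat n + 1))) \<longlonglongrightarrow> 1"
    using Gamma_ratio_lim_norm[of w] assms unfolding w_def by simp
  have R2': "(\<lambda>n. fact n * exp (Re (of_real x) * ln (real n)) / norm (Gamma (of_real x + of_nat n + 1 :: complex))) \<longlonglongrightarrow> 1"
    using assms by (intro Gamma_ratio_lim_norm) simp
  have gr: "norm (Gamma (of_real x + of_nat n + 1 :: complex)) = Gamma (x + real (Suc n))" for n
  proof -
    have "(of_real x + of_nat n + 1 :: complex) = of_real (x + real (Suc n))" by simp
    then have "Gamma (of_real x + of_nat n + 1 :: complex) = of_real (Gamma (x + real (Suc n)))"
      by (simp only: Gamma_complex_of_real)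
    then show ?thesis using assms by simp
  qed
  have R2: "(\<lambda>n. fact n * exp (x * ln (real n)) / Gamma (x + real (Suc n))) \<longlonglongrightarrow> 1"
    using R2' unfolding gr by simp
  have gw: "w + of_nat n + 1 = Complex (x + real (Suc n)) q" for n
    unfolding w_def by (simp add: complex_eq_iff)
  have pos1: "norm (Gamma (Complex (x + real (Suc n)) q)) > 0" for n
    using Gamma_Complex_pos[of "x + real (Suc n)" q] assms by simp
  have pos2: "Gamma (x + real (Suc n)) > 0" for n using assms by simp
  have Q: "(\<lambda>n. (fact n * exp (x * ln (real n)) / Gamma (x + real (Suc n))) /
      (fact n * exp (x * ln (real n)) / norm (Gamma (w + of_nat n + 1)))) \<longlonglongrightarrow> 1/1"
    by (intro tendsto_divide R1 R2) simp
  have qe: "(fact n * exp (x * ln (real n)) / Gamma (x + real (Suc n))) /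
      (fact n * exp (x * ln (real n)) / norm (Gamma (w + of_nat n + 1))) =
      norm (Gamma (Complex (x + real (Suc n)) q)) / Gamma (x + real (Suc n))" for n
  proof -
    have "(fact n :: real) * exp (x * ln (real n)) > 0" by simp
    then show ?thesis unfolding gw using pos1[of n] pos2[of n] by (simp add: field_simps)
  qed
  have "(\<lambda>n. ln (norm (Gamma (Complex (x + real (Suc n)) q)) / Gamma (x + real (Suc n)))) \<longlonglongrightarrow> ln 1"
    using Q unfolding qe by (intro tendsto_ln) simp_all
  moreover have "ln (norm (Gamma (Complex (x + real (Suc n)) q)) / Gamma (x + real (Suc n))) =
     ln (norm (Gamma (Complex (x + real (Suc n)) q))) - ln (Gamma (x + real (Suc n)))" for n
    using pos1[of n] pos2[of n] by (simp add: ln_div)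
  ultimately have "(\<lambda>n. ln (norm (Gamma (Complex (x + real (Suc n)) q))) - ln (Gamma (x + real (Suc n)))) \<longlonglongrightarrow> 0"
    by simp
  then show ?thesis using filterlim_sequentially_Suc[of "\<lambda>n. ln (norm (Gamma (Complex (x + real n) q))) - ln (Gamma (x + real n))"]
    by simp
qed

lemma Mc_Mr_diff:
  assumes "y > 0"
  shows "Mc y q - Mr y = (ln (norm (Gamma (Complex y q))) - ln (Gamma y)) -
     ((y-1/2)*(ln(y\<^sup>2+q\<^sup>2) - ln(y\<^sup>2))/2 - q*arctan(q/y))"
proof -
  have l: "ln (y\<^sup>2) = 2 * ln y" using assms by (simp add: ln_realpow)
  show ?thesis unfolding Mc_def Mr_def Fq_def l by (simp add: field_simps)
qed

lemma Mc_lim: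
  assumes "x > 0"
  shows "(\<lambda>n. Mc (x + real n) q) \<longlonglongrightarrow> 0"
proof -
  have "(\<lambda>n. ((ln (norm (Gamma (Complex (x + real n) q))) - ln (Gamma (x + real n))) -
     ((x+real n-1/2)*(ln((x+real n)\<^sup>2+q\<^sup>2) - ln((x+real n)\<^sup>2))/2 - q*arctan(q/(x+real n))))
     + Mr (x + real n)) \<longlonglongrightarrow> (0 - 0) + 0"
    by (intro tendsto_add tendsto_diff Gamma_diff_lim Fdiff_lim Mr_lim assms)
  moreover have "Mc (x + real n) q = ((ln (norm (Gamma (Complex (x + real n) q))) - ln (Gamma (x + real n))) -
     ((x+real n-1/2)*(ln((x+real n)\<^sup>2+q\<^sup>2) - ln((x+real n)\<^sup>2))/2 - q*arctan(q/(x+real n))))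
     + Mr (x + real n)" for n
    using Mc_Mr_diff[of "x + real n" q] assms by simp
  ultimately show ?thesis by simp
qed

lemma Mc_bound:
  assumes "x > 0"
  shows "\<bar>Mc x q\<bar> \<le> 1/(12*x)"
proof -
  have L: "(\<lambda>n. 1/(12*x) + \<bar>Mc (x + real n) q\<bar>) \<longlonglongrightarrow> 1/(12*x) + \<bar>0\<bar>"
    by (intro tendsto_add tendsto_const tendsto_rabs Mc_lim assms)
  have "\<bar>Mc x q\<bar> \<le> 1/(12*x) + \<bar>Mc (x + real n) q\<bar>" for n
    using Mc_telescope'[OF assms, of q n] by linarith
  then show ?thesis using LIMSEQ_le_const[OF L] by simp
qed



lemma arctan_le_self: "(x::real) \<ge> 0 \<Longrightarrow> arctan x \<le> x"
proof -
  assume x: "x \<ge> 0"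
  have "(\<lambda>t. t - arctan t) 0 \<le> (\<lambda>t. t - arctan t) x"
  proof (rule DERIV_nonneg_imp_nondecreasing[OF x])
    fix t :: real assume "0 \<le> t" "t \<le> x"
    have "((\<lambda>t. t - arctan t) has_real_derivative 1 - inverse (1 + t\<^sup>2)) (at t)"
      by (auto intro!: derivative_eq_intros)
    moreover have "inverse (1 + t\<^sup>2) \<le> 1"
      by (simp add: add_pos_nonneg inverse_le_1_iff)
    ultimately show "\<exists>y. ((\<lambda>t. t - arctan t) has_real_derivative y) (at t) \<and> 0 \<le> y" by auto
  qed
  then show ?thesis by simp
qed

lemma pi_le_16_5: "pi \<le> 16/5"
proof -
  have "arctan (1/5) \<le> (1/5::real)" by (rule arctan_le_self) simp
  moreover have "arctan (1/239) \<ge> (0::real)" by simp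
  ultimately show ?thesis using machin by linarith
qed

lemma pi_sq_le: "pi\<^sup>2 \<le> 256/25"
proof -
  have "pi\<^sup>2 \<le> (16/5)\<^sup>2" using pi_le_16_5 by (intro power_mono) auto
  then show ?thesis by (simp add: power2_eq_square)
qed

lemma E_bounds:
  fixes a m :: real
  assumes a: "a \<ge> 1" and m: "\<bar>m\<bar> \<le> 1/(6*a)"
  shows "(1 - 3/(a*pi\<^sup>2))\<^sup>2 \<le> exp (2*m) \<and> exp (2*m) \<le> (1 + 3/(a*pi\<^sup>2))\<^sup>2"
proof -
  define y where "y = 1/(6*a)"
  have y0: "y > 0" and y1: "y \<le> 1/6" unfolding y_def using a by (auto simp: field_simps)
  have p2: "pi\<^sup>2 \<ge> 4"
  proof -
    have "2\<^sup>2 \<le> pi\<^sup>2" using pi_ge_two by (intro power_mono) auto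
    then show ?thesis by simp
  qed
  have c: "3/(a*pi\<^sup>2) = 18*y/pi\<^sup>2" unfolding y_def using a by (simp add: field_simps)
  have upper: "exp y \<le> 1 + 18*y/pi\<^sup>2"
  proof -
    have e1: "exp y \<le> 1 + y + y\<^sup>2" using y0 y1 by (intro exp_bound) auto
    have e2: "y\<^sup>2 \<le> y/6" using y0 y1 by (simp add: power2_eq_square mult_left_mono)
    have e3: "y/6 + y \<le> 18*y/pi\<^sup>2"
    proof -
      have "7/6 \<le> 18/pi\<^sup>2" using pi_sq_le p2 by (simp add: field_simps)
      then have "y * (7/6) \<le> y * (18/pi\<^sup>2)" using y0 by (intro mult_left_mono) auto
      then show ?thesis by simp
    qed
    show ?thesis using e1 e2 e3 by linarith
  qed
  have h3: "18*y/pi\<^sup>2 = y * (18/pi\<^sup>2)" by simp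
  have lower: "1 - 18*y/pi\<^sup>2 \<le> exp (-y)" and lpos: "0 \<le> 1 - 18*y/pi\<^sup>2"
  proof -
    have "1 \<le> 18/pi\<^sup>2" using pi_sq_le p2 by (simp add: field_simps)
    then have "y * 1 \<le> y * (18/pi\<^sup>2)" using y0 by (intro mult_left_mono) auto
    then have h1: "y \<le> y * (18/pi\<^sup>2)" by (simp only: mult_1_right)
    have h2: "1 - y \<le> exp (-y)" using exp_ge_add_one_self[of "-y"] by simp
    show "1 - 18*y/pi\<^sup>2 \<le> exp (-y)" unfolding h3 using h1 h2 by linarith
    have "18/pi\<^sup>2 \<le> 18/4" using p2 by (intro divide_left_mono) auto
    then have "y * (18/pi\<^sup>2) \<le> (1/6) * (18/4)" using y0 y1 by (intro mult_mono) auto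
    then show "0 \<le> 1 - 18*y/pi\<^sup>2" unfolding h3 by linarith
  qed
  have mm: "-y \<le> m" "m \<le> y" using m unfolding y_def by auto
  have "exp (2*m) \<le> exp (2*y)" using mm by simp
  also have "exp (2*y) = (exp y)\<^sup>2" by (simp add: power2_eq_square flip: exp_add)
  also have "\<dots> \<le> (1 + 18*y/pi\<^sup>2)\<^sup>2" using upper by (intro power_mono) auto
  finally have U: "exp (2*m) \<le> (1 + 3/(a*pi\<^sup>2))\<^sup>2" unfolding c .
  have "(1 - 18*y/pi\<^sup>2)\<^sup>2 \<le> (exp (-y))\<^sup>2" using lower lpos by (intro power_mono) auto
  also have "(exp (-y))\<^sup>2 = exp (2*(-y))" by (simp add: power2_eq_square flip: exp_add)
  also have "\<dots> \<le> exp (2*m)" using mm by simp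
  finally have L: "(1 - 3/(a*pi\<^sup>2))\<^sup>2 \<le> exp (2*m)" unfolding c .
  show ?thesis using U L by simp
qed



lemma norm_Gamma_sq:
  assumes "u > 0"
  shows "(cmod (Gamma (Complex u v)))\<^sup>2 = 2*pi * ((u\<^sup>2+v\<^sup>2) powr (u - 1/2)) * exp (- 2 * v * arctan (v/u) - 2 * u) * exp (2*Mc u v)"
proof -
  define G where "G = cmod (Gamma (Complex u v))"
  have G: "G > 0" using Gamma_Complex_pos[OF assms] G_def by simp
  have X: "u\<^sup>2+v\<^sup>2 > 0" using assms by (simp add: add_pos_nonneg)
  have lnG: "ln G = Mc u v + Fq u v + ln(2*pi)/2" unfolding Mc_def G_def by simp
  have s1: "G\<^sup>2 = exp (ln G + ln G)"
  proof -
    have "exp (ln G + ln G) = exp (ln G) * exp (ln G)" by (rule exp_add)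
    also have "\<dots> = G * G" using G by simp
    finally show ?thesis by (simp add: power2_eq_square)
  qed
  have s2: "ln G + ln G = ln(2*pi) + ((u - 1/2) * ln(u\<^sup>2+v\<^sup>2)) + (- 2 * v * arctan (v/u) - 2 * u) + 2*Mc u v"
    unfolding lnG Fq_def by (simp add: algebra_simps)
  have s3: "exp (ln(2*pi) + ((u - 1/2) * ln(u\<^sup>2+v\<^sup>2)) + (- 2 * v * arctan (v/u) - 2 * u) + 2*Mc u v) =
     2*pi * exp ((u - 1/2) * ln(u\<^sup>2+v\<^sup>2)) * exp (- 2 * v * arctan (v/u) - 2 * u) * exp (2*Mc u v)"
    by (simp add: exp_add)
  have s4: "exp ((u - 1/2) * ln(u\<^sup>2+v\<^sup>2)) = (u\<^sup>2+v\<^sup>2) powr (u - 1/2)"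
    using X assms by (simp add: powr_def)
  show ?thesis using s1 s2 s3 s4 unfolding G_def by simp
qed

lemma Na_eq:
  assumes "a > 0"
  shows "(cmod (Gamma (Complex (a/2) (x/2))))\<^sup>2 =
    2*pi * (((a/2)\<^sup>2+(x/2)\<^sup>2) powr ((a-1)/2)) * exp (-(x*arctan(x/a)) - a) * exp (2*Mc (a/2) (x/2))"
proof -
  have a2: "a/2 > 0" using assms by simp
  have e1: "a/2 - 1/2 = (a-1)/2" by (simp add: field_simps)
  have e2: "- 2 * (x/2) * arctan((x/2)/(a/2)) - 2*(a/2) = -(x*arctan(x/a)) - a" using assms by simp
  show ?thesis using norm_Gamma_sq[OF a2, of "x/2"] unfolding e1 e2 .
qed

lemma alg_final:
  fixes t1 t2 t3 Ga Gb Gab Nab A B Pa Pb Xa Xb Ea Eb :: real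
  assumes "t1 * t2 = t3 / 4" "t3 > 0" "Ga > 0" "Gb > 0" "Gab > 0" "Nab > 0" "A > 0" "B > 0"
  shows "(t1/(pi*Ga) * (2*pi*Pa*(Xa/A)*Ea)) * (t2/(pi*Gb) * (2*pi*Pb*(Xb/B)*Eb)) / (t3/(pi*Gab) * Nab)
        = (pi*Gab/((A*B)*Ga*Gb*Nab) * Pa * Pb * (Xa*Xb)) * (Ea*Eb)"
proof -
  have "(t1/(pi*Ga) * (2*pi*Pa*(Xa/A)*Ea)) * (t2/(pi*Gb) * (2*pi*Pb*(Xb/B)*Eb)) / (t3/(pi*Gab) * Nab)
     = (t1*t2) * 4 * pi * Gab * Pa * Pb * Xa * Xb * Ea * Eb / (t3 * A * B * Ga * Gb * Nab)"
    using assms by (simp add: field_simps)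
  also have "\<dots> = (pi*Gab/((A*B)*Ga*Gb*Nab) * Pa * Pb * (Xa*Xb)) * (Ea*Eb)"
    unfolding assms(1) using assms by (simp add: field_simps)
  finally show ?thesis .
qed

theorem mainTheorem2:
  fixes a b s :: real
  assumes "a \<ge> 1" and "b \<ge> 1"
  shows "\<forall>x::real.
    (1 - 3 / (a * pi\<^sup>2))\<^sup>2 * (1 - 3 / (b * pi\<^sup>2))\<^sup>2 * g_approx a b s x \<le> betaized_MM a b s x \<and>
    betaized_MM a b s x \<le> (1 + 3 / (a * pi\<^sup>2))\<^sup>2 * (1 + 3 / (b * pi\<^sup>2))\<^sup>2 * g_approx a b s x"
proof (intro allI)
  fix x :: real
  have a0: "a > 0" and b0: "b > 0" using assms by auto
  define Ea where "Ea = exp (2*Mc (a/2) (x/2))"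
  define Eb where "Eb = exp (2*Mc (b/2) ((s-x)/2))"
  define Xa where "Xa = exp (-(x*arctan(x/a)))"
  define Xb where "Xb = exp (-((s-x)*arctan((s-x)/b)))"
  define Pa where "Pa = ((a/2)\<^sup>2+(x/2)\<^sup>2) powr ((a-1)/2)"
  define Pb where "Pb = ((b/2)\<^sup>2+((s-x)/2)\<^sup>2) powr ((b-1)/2)"
  define Nab where "Nab = (cmod (Gamma (Complex ((a+b)/2) (s/2))))\<^sup>2"
  have NA: "(cmod (Gamma (Complex (a/2) (x/2))))\<^sup>2 = 2*pi*Pa*(Xa/exp a)*Ea"
    using Na_eq[OF a0, of x] unfolding Pa_def Xa_def Ea_def by (simp add: exp_diff)
  have NB: "(cmod (Gamma (Complex (b/2) ((s-x)/2))))\<^sup>2 = 2*pi*Pb*(Xb/exp b)*Eb"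
    using Na_eq[OF b0, of "s-x"] unfolding Pb_def Xb_def Eb_def by (simp add: exp_diff)
  have Nab: "Nab > 0" unfolding Nab_def using Gamma_Complex_pos[of "(a+b)/2" "s/2"] a0 b0 by simp
  have t: "2 powr (a-2) * 2 powr (b-2) = 2 powr (a+b-2) / 4"
  proof -
    have "2 powr (a-2) * 2 powr (b-2) = 2 powr ((a+b-2) - 2)" by (simp add: powr_add[symmetric] algebra_simps)
    also have "\<dots> = 2 powr (a+b-2) / 2 powr 2" by (rule powr_diff)
    finally show ?thesis by simp
  qed
  have ex: "exp (- x * arctan (x / a) - (s - x) * arctan ((s - x) / b)) = Xa * Xb"
  proof -
    have "- x * arctan (x / a) - (s - x) * arctan ((s - x) / b) = -(x*arctan(x/a)) + -((s-x)*arctan((s-x)/b))"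
      by simp
    then show ?thesis unfolding Xa_def Xb_def by (simp only: exp_add)
  qed
  have eab: "exp (a + b) = exp a * exp b" by (rule exp_add)
  have eq: "betaized_MM a b s x = g_approx a b s x * (Ea * Eb)"
  proof -
    have "betaized_MM a b s x = (2 powr (a-2)/(pi*Gamma a) * (2*pi*Pa*(Xa/exp a)*Ea)) *
        (2 powr (b-2)/(pi*Gamma b) * (2*pi*Pb*(Xb/exp b)*Eb)) / (2 powr (a+b-2)/(pi*Gamma (a+b)) * Nab)"
      unfolding betaized_MM_def MM_density_def NA NB Nab_def by simp
    also have "\<dots> = (pi*Gamma (a+b)/((exp a*exp b)*Gamma a*Gamma b*Nab) * Pa * Pb * (Xa*Xb)) * (Ea*Eb)"
      using a0 b0 Nab by (intro alg_final t) auto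
    also have "\<dots> = g_approx a b s x * (Ea * Eb)"
      unfolding g_approx_def gamma_const_def ex eab Pa_def Pb_def Nab_def by simp
    finally show ?thesis .
  qed
  have gnn: "g_approx a b s x \<ge> 0"
    unfolding g_approx_def gamma_const_def using a0 b0 Nab[unfolded Nab_def] by simp
  have bA: "(1 - 3/(a*pi\<^sup>2))\<^sup>2 \<le> Ea \<and> Ea \<le> (1 + 3/(a*pi\<^sup>2))\<^sup>2"
    unfolding Ea_def
  proof (rule E_bounds[OF assms(1)])
    have "\<bar>Mc (a/2) (x/2)\<bar> \<le> 1/(12*(a/2))" using a0 by (intro Mc_bound) simp
    then show "\<bar>Mc (a/2) (x/2)\<bar> \<le> 1/(6*a)" by simp
  qed
  have bB: "(1 - 3/(b*pi\<^sup>2))\<^sup>2 \<le> Eb \<and> Eb \<le> (1 + 3/(b*pi\<^sup>2))\<^sup>2"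
    unfolding Eb_def
  proof (rule E_bounds[OF assms(2)])
    have "\<bar>Mc (b/2) ((s-x)/2)\<bar> \<le> 1/(12*(b/2))" using b0 by (intro Mc_bound) simp
    then show "\<bar>Mc (b/2) ((s-x)/2)\<bar> \<le> 1/(6*b)" by simp
  qed
  have Ea0: "Ea \<ge> 0" and Eb0: "Eb \<ge> 0" unfolding Ea_def Eb_def by simp_all
  have lo: "(1 - 3/(a*pi\<^sup>2))\<^sup>2 * (1 - 3/(b*pi\<^sup>2))\<^sup>2 \<le> Ea * Eb"
    using bA bB Ea0 by (intro mult_mono) auto
  have up: "Ea * Eb \<le> (1 + 3/(a*pi\<^sup>2))\<^sup>2 * (1 + 3/(b*pi\<^sup>2))\<^sup>2"
    using bA bB Eb0 by (intro mult_mono) auto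
  have "(1 - 3/(a*pi\<^sup>2))\<^sup>2 * (1 - 3/(b*pi\<^sup>2))\<^sup>2 * g_approx a b s x \<le> (Ea * Eb) * g_approx a b s x"
    using lo gnn by (rule mult_right_mono)
  moreover have "(Ea * Eb) * g_approx a b s x \<le> (1 + 3/(a*pi\<^sup>2))\<^sup>2 * (1 + 3/(b*pi\<^sup>2))\<^sup>2 * g_approx a b s x"
    using up gnn by (rule mult_right_mono)
  ultimately show "(1 - 3 / (a * pi\<^sup>2))\<^sup>2 * (1 - 3 / (b * pi\<^sup>2))\<^sup>2 * g_approx a b s x \<le> betaized_MM a b s x \<and>
    betaized_MM a b s x \<le> (1 + 3 / (a * pi\<^sup>2))\<^sup>2 * (1 + 3 / (b * pi\<^sup>2))\<^sup>2 * g_approx a b s x"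
    unfolding eq by (simp add: mult.commute)
qed

end
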